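(* Let $G$ be a simplicial group and $c\in C_n(EG)$. (i) For any $0\le k\le n+1$, $P^{n+1}_k(Sc)=e_0\otimes Sc$ if $k=0$, and $P^{n+1}_k(Sc)=(S\otimes1)P^n_{k-1}(c)$ if $k>0$. (ii) $\Delta\,Sc=(S\otimes1)\,\Delta c+e_0\otimes Sc$.
   Context: Chains are normalized, with Alexander–Whitney diagonal $\Delta$. $EG$ is the simplicial set with $p$-simplices $(g_p,[g_{p-1},\dots,g_0])\in G_p\times G_{p-1}\times\dots\times G_0$, faces $\partial_k(g_p,[g_{p-1},\dots,g_0])=(\partial_kg_p,[\partial_{k-1}g_{p-1},\dots,\partial_1g_{p-k+1},(\partial_0g_{p-k})g_{p-k-1},g_{p-k-2},\dots,g_0])$ (for $k=0$: $((\partial_0g_p)g_{p-1},[g_{p-2},\dots,g_0])$; for $k=p$: $(\partial_pg_p,[\partial_{p-1}g_{p-1},\dots,\partial_1g_1])$) and degeneracies $s_k(g_p,[\dots])=(s_kg_p,[s_{k-1}g_{p-1},\dots,s_0g_{p-k},1_{p-k},g_{p-k-1},\dots,g_0])$; $e_0=(1_0,[\,])$. $S\colon EG_p\to EG_{p+1}$, $S(g_p,[g_{p-1},\dots,g_0])=(1_{p+1},[g_p,g_{p-1},\dots,g_0])$, extended linearly to $C(EG)$. $P^n_k\colon C_n\to C_k\otimes C_{n-k}$, $\sigma\mapsto\sigma(0,\dots,k)\otimes\sigma(k,\dots,n)$. *)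

theory Defs
  imports "HOL-Algebra.Group"
begin

definition simplicial_group ::
  "(nat \<Rightarrow> 'a monoid) \<Rightarrow> (nat \<Rightarrow> nat \<Rightarrow> 'a \<Rightarrow> 'a) \<Rightarrow> (nat \<Rightarrow> nat \<Rightarrow> 'a \<Rightarrow> 'a) \<Rightarrow> bool" where
  "simplicial_group G d s \<longleftrightarrow>
     (\<forall>p. group (G p)) \<and>
     (\<forall>p k. k \<le> Suc p \<longrightarrow> d (Suc p) k \<in> hom (G (Suc p)) (G p)) \<and>
     (\<forall>p k. k \<le> p \<longrightarrow> s p k \<in> hom (G p) (G (Suc p))) \<and>
     (\<forall>p i j x. x \<in> carrier (G (Suc (Suc p))) \<and> i < j \<and> j \<le> Suc (Suc p) \<longrightarrow>
        d (Suc p) i (d (Suc (Suc p)) j x) = d (Suc p) (j - 1) (d (Suc (Suc p)) i x)) \<and>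
     (\<forall>p i j x. x \<in> carrier (G (Suc p)) \<and> i < j \<and> j \<le> Suc p \<longrightarrow>
        d (Suc (Suc p)) i (s (Suc p) j x) = s p (j - 1) (d (Suc p) i x)) \<and>
     (\<forall>q j x. x \<in> carrier (G q) \<and> j \<le> q \<longrightarrow>
        d (Suc q) j (s q j x) = x \<and> d (Suc q) (Suc j) (s q j x) = x) \<and>
     (\<forall>p i j x. x \<in> carrier (G (Suc p)) \<and> Suc j < i \<and> i \<le> Suc (Suc p) \<longrightarrow>
        d (Suc (Suc p)) i (s (Suc p) j x) = s p j (d (Suc p) (i - 1) x)) \<and>
     (\<forall>q i j x. x \<in> carrier (G q) \<and> i \<le> j \<and> j \<le> q \<longrightarrow>
        s (Suc q) i (s q j x) = s (Suc q) (Suc j) (s q i x))"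

text \<open>A p-simplex (g_p,[g_{p-1},...,g_0]) of EG is encoded as the list [g_p, g_{p-1}, ..., g_0]
  of length p+1, so that xs ! i = g_{p-i} \<in> G_{p-i}.\<close>

definition EG_simplices :: "(nat \<Rightarrow> 'a monoid) \<Rightarrow> nat \<Rightarrow> 'a list set" where
  "EG_simplices G p = {xs. length xs = Suc p \<and> (\<forall>i\<le>p. xs ! i \<in> carrier (G (p - i)))}"

definition EG_face ::
  "(nat \<Rightarrow> 'a monoid) \<Rightarrow> (nat \<Rightarrow> nat \<Rightarrow> 'a \<Rightarrow> 'a) \<Rightarrow> nat \<Rightarrow> 'a list \<Rightarrow> 'a list" where
  "EG_face G d k xs = (let p = length xs - 1 in
     if k = p then map (\<lambda>i. d (p - i) (k - i) (xs ! i)) [0..<p]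
     else map (\<lambda>i. d (p - i) (k - i) (xs ! i)) [0..<k]
          @ [(d (p - k) 0 (xs ! k)) \<otimes>\<^bsub>G (p - k - 1)\<^esub> (xs ! (Suc k))]
          @ drop (Suc (Suc k)) xs)"

definition EG_degen ::
  "(nat \<Rightarrow> 'a monoid) \<Rightarrow> (nat \<Rightarrow> nat \<Rightarrow> 'a \<Rightarrow> 'a) \<Rightarrow> nat \<Rightarrow> 'a list \<Rightarrow> 'a list" where
  "EG_degen G s k xs = (let p = length xs - 1 in
     map (\<lambda>i. s (p - i) (k - i) (xs ! i)) [0..<Suc k] @ [\<one>\<^bsub>G (p - k)\<^esub>] @ drop (Suc k) xs)"

definition EG_degenerate ::
  "(nat \<Rightarrow> 'a monoid) \<Rightarrow> (nat \<Rightarrow> nat \<Rightarrow> 'a \<Rightarrow> 'a) \<Rightarrow> 'a list \<Rightarrow> bool" where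
  "EG_degenerate G s \<sigma> \<longleftrightarrow>
     (\<exists>q k y. y \<in> EG_simplices G q \<and> k \<le> q \<and> \<sigma> = EG_degen G s k y)"

text \<open>Normalized chains C_n(EG): finite integer combinations of nondegenerate n-simplices
  (the normalized chain group is free on the nondegenerate simplices; degenerate simplices are 0).\<close>
definition EG_chains ::
  "(nat \<Rightarrow> 'a monoid) \<Rightarrow> (nat \<Rightarrow> nat \<Rightarrow> 'a \<Rightarrow> 'a) \<Rightarrow> nat \<Rightarrow> ('a list \<Rightarrow> int) set" where
  "EG_chains G s n = {c. finite {\<sigma>. c \<sigma> \<noteq> 0} \<and>
     (\<forall>\<sigma>. c \<sigma> \<noteq> 0 \<longrightarrow> \<sigma> \<in> EG_simplices G n \<and> \<not> EG_degenerate G s \<sigma>)}"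

definition gen ::
  "(nat \<Rightarrow> 'a monoid) \<Rightarrow> (nat \<Rightarrow> nat \<Rightarrow> 'a \<Rightarrow> 'a) \<Rightarrow> 'a list \<Rightarrow> ('a list \<Rightarrow> int)" where
  "gen G s \<sigma> = (\<lambda>\<tau>. if \<tau> = \<sigma> \<and> \<not> EG_degenerate G s \<sigma> then 1 else 0)"

text \<open>Tensor products of normalized chains: C_k \<otimes> C_m is free on pairs of nondegenerate
  simplices; elements of (\<Oplus>_k C_k \<otimes> C_{n-k}) are integer functions on pairs (the degrees
  are recorded by the lengths of the simplices).\<close>
definition tensor :: "('b \<Rightarrow> int) \<Rightarrow> ('b \<Rightarrow> int) \<Rightarrow> ('b \<times> 'b \<Rightarrow> int)" where
  "tensor x y = (\<lambda>(\<sigma>, \<tau>). x \<sigma> * y \<tau>)"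

definition e0 :: "(nat \<Rightarrow> 'a monoid) \<Rightarrow> 'a list" where
  "e0 G = [\<one>\<^bsub>G 0\<^esub>]"

definition S_simp :: "(nat \<Rightarrow> 'a monoid) \<Rightarrow> 'a list \<Rightarrow> 'a list" where
  "S_simp G xs = \<one>\<^bsub>G (length xs)\<^esub> # xs"

definition S_chain ::
  "(nat \<Rightarrow> 'a monoid) \<Rightarrow> (nat \<Rightarrow> nat \<Rightarrow> 'a \<Rightarrow> 'a) \<Rightarrow> ('a list \<Rightarrow> int) \<Rightarrow> ('a list \<Rightarrow> int)" where
  "S_chain G s c = (\<lambda>\<tau>. \<Sum>\<sigma>\<in>{\<sigma>. c \<sigma> \<noteq> 0}. c \<sigma> * gen G s (S_simp G \<sigma>) \<tau>)"

definition S_tensor_id ::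
  "(nat \<Rightarrow> 'a monoid) \<Rightarrow> (nat \<Rightarrow> nat \<Rightarrow> 'a \<Rightarrow> 'a) \<Rightarrow> ('a list \<times> 'a list \<Rightarrow> int) \<Rightarrow> ('a list \<times> 'a list \<Rightarrow> int)" where
  "S_tensor_id G s x = (\<lambda>\<rho>. \<Sum>(\<sigma>, \<tau>)\<in>{\<pi>. x \<pi> \<noteq> 0}.
       x (\<sigma>, \<tau>) * tensor (gen G s (S_simp G \<sigma>)) (gen G s \<tau>) \<rho>)"

text \<open>Front face \<sigma>(0,...,k) = \<partial>_{k+1} ... \<partial>_n \<sigma> and back face \<sigma>(k,...,n) = \<partial>_0^k \<sigma>
  of an n-simplex \<sigma>.\<close>
definition front_face ::
  "(nat \<Rightarrow> 'a monoid) \<Rightarrow> (nat \<Rightarrow> nat \<Rightarrow> 'a \<Rightarrow> 'a) \<Rightarrow> nat \<Rightarrow> nat \<Rightarrow> 'a list \<Rightarrow> 'a list" where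
  "front_face G d n k = ((\<lambda>xs. EG_face G d (length xs - 1) xs) ^^ (n - k))"

definition back_face ::
  "(nat \<Rightarrow> 'a monoid) \<Rightarrow> (nat \<Rightarrow> nat \<Rightarrow> 'a \<Rightarrow> 'a) \<Rightarrow> nat \<Rightarrow> 'a list \<Rightarrow> 'a list" where
  "back_face G d k = (EG_face G d 0 ^^ k)"

definition P ::
  "(nat \<Rightarrow> 'a monoid) \<Rightarrow> (nat \<Rightarrow> nat \<Rightarrow> 'a \<Rightarrow> 'a) \<Rightarrow> (nat \<Rightarrow> nat \<Rightarrow> 'a \<Rightarrow> 'a)
     \<Rightarrow> nat \<Rightarrow> nat \<Rightarrow> ('a list \<Rightarrow> int) \<Rightarrow> ('a list \<times> 'a list \<Rightarrow> int)" where
  "P G d s n k c = (\<lambda>\<rho>. \<Sum>\<sigma>\<in>{\<sigma>. c \<sigma> \<noteq> 0}.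
       c \<sigma> * tensor (gen G s (front_face G d n k \<sigma>)) (gen G s (back_face G d k \<sigma>)) \<rho>)"

definition AW ::
  "(nat \<Rightarrow> 'a monoid) \<Rightarrow> (nat \<Rightarrow> nat \<Rightarrow> 'a \<Rightarrow> 'a) \<Rightarrow> (nat \<Rightarrow> nat \<Rightarrow> 'a \<Rightarrow> 'a)
     \<Rightarrow> nat \<Rightarrow> ('a list \<Rightarrow> int) \<Rightarrow> ('a list \<times> 'a list \<Rightarrow> int)" where
  "AW G d s n c = (\<lambda>\<rho>. \<Sum>k\<le>n. P G d s n k c \<rho>)"

end

theory Submission
  imports Defs
begin

lemma sg_group: "simplicial_group G d s \<Longrightarrow> group (G p)"
  by (simp add: simplicial_group_def)

lemma sg_d_one: "simplicial_group G d s \<Longrightarrow> k \<le> Suc p \<Longrightarrow> d (Suc p) k \<one>\<^bsub>G (Suc p)\<^esub> = \<one>\<^bsub>G p\<^esub>"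
  unfolding simplicial_group_def by (metis hom_one)

lemma sg_s_one: "simplicial_group G d s \<Longrightarrow> k \<le> p \<Longrightarrow> s p k \<one>\<^bsub>G p\<^esub> = \<one>\<^bsub>G (Suc p)\<^esub>"
  unfolding simplicial_group_def by (metis hom_one)

lemma sg_d_carrier: "simplicial_group G d s \<Longrightarrow> k \<le> Suc p \<Longrightarrow> x \<in> carrier (G (Suc p)) \<Longrightarrow> d (Suc p) k x \<in> carrier (G p)"
  unfolding simplicial_group_def by (metis hom_in_carrier)

lemma sg_s_carrier: "simplicial_group G d s \<Longrightarrow> k \<le> p \<Longrightarrow> x \<in> carrier (G p) \<Longrightarrow> s p k x \<in> carrier (G (Suc p))"
  unfolding simplicial_group_def by (metis hom_in_carrier)

lemma sg_ds: "simplicial_group G d s \<Longrightarrow> k \<le> p \<Longrightarrow> x \<in> carrier (G p) \<Longrightarrow> d (Suc p) k (s p k x) = x"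
  unfolding simplicial_group_def by blast

definition LF where "LF G d = (\<lambda>xs. EG_face G d (length xs - 1) xs)"

lemma front_face_LF: "front_face G d n k = LF G d ^^ (n - k)"
  unfolding front_face_def LF_def ..

lemma LF_eq: "LF G d xs = map (\<lambda>i. d (length xs - 1 - i) (length xs - 1 - i) (xs ! i)) [0..<length xs - 1]"
  unfolding LF_def EG_face_def Let_def by simp

lemma LF_S:
  assumes sg: "simplicial_group G d s" and ne: "xs \<noteq> []"
  shows "LF G d (S_simp G xs) = S_simp G (LF G d xs)"
proof -
  obtain m where m: "length xs = Suc m" using ne by (cases xs) auto
  show ?thesis
    unfolding LF_eq S_simp_def using m
    by (simp add: map_upt_Suc sg_d_one[OF sg] del: upt_Suc)
qed

lemma LF_length: "length (LF G d xs) = length xs - 1"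
  unfolding LF_eq by simp

lemma LF_iter_length: "length ((LF G d ^^ j) xs) = length xs - j"
  by (induction j) (simp_all add: LF_length)

lemma LF_iter_S:
  assumes sg: "simplicial_group G d s"
  shows "j < length xs \<Longrightarrow> (LF G d ^^ j) (S_simp G xs) = S_simp G ((LF G d ^^ j) xs)"
proof (induction j)
  case 0 then show ?case by simp
next
  case (Suc j)
  have ne: "(LF G d ^^ j) xs \<noteq> []" using Suc.prems LF_iter_length[where G=G and d=d and j=j and xs=xs]
    by auto
  show ?case using Suc LF_S[OF sg ne] by simp
qed

lemma LF_simp:
  assumes sg: "simplicial_group G d s" and xs: "xs \<in> EG_simplices G (Suc p)"
  shows "LF G d xs \<in> EG_simplices G p"
    and "xs ! 0 = \<one>\<^bsub>G (Suc p)\<^esub> \<Longrightarrow> LF G d xs ! 0 = \<one>\<^bsub>G p\<^esub>"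
proof -
  have len: "length xs = Suc (Suc p)" using xs by (simp add: EG_simplices_def)
  have c: "\<And>i. i \<le> Suc p \<Longrightarrow> xs ! i \<in> carrier (G (Suc p - i))" using xs by (simp add: EG_simplices_def)
  have "\<forall>i\<le>p. d (Suc p - i) (Suc p - i) (xs ! i) \<in> carrier (G (p - i))"
  proof (intro allI impI)
    fix i assume i: "i \<le> p"
    have e: "Suc p - i = Suc (p - i)" using i by simp
    have "xs ! i \<in> carrier (G (Suc (p - i)))" using c[of i] i e by simp
    then show "d (Suc p - i) (Suc p - i) (xs ! i) \<in> carrier (G (p - i))"
      unfolding e by (rule sg_d_carrier[OF sg, rotated], simp)
  qed
  then show "LF G d xs \<in> EG_simplices G p"
    unfolding EG_simplices_def LF_eq using len by (simp del: upt_Suc)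
  assume "xs ! 0 = \<one>\<^bsub>G (Suc p)\<^esub>"
  then show "LF G d xs ! 0 = \<one>\<^bsub>G p\<^esub>"
    unfolding LF_eq using len sg_d_one[OF sg, of "Suc p" p] by (simp del: upt_Suc)
qed

lemma LF_iter_simp:
  assumes sg: "simplicial_group G d s"
  shows "xs \<in> EG_simplices G (m + j) \<Longrightarrow> (LF G d ^^ j) xs \<in> EG_simplices G m
     \<and> (xs ! 0 = \<one>\<^bsub>G (m + j)\<^esub> \<longrightarrow> (LF G d ^^ j) xs ! 0 = \<one>\<^bsub>G m\<^esub>)"
proof (induction j arbitrary: m)
  case 0 then show ?case by simp
next
  case (Suc j)
  have IH: "(LF G d ^^ j) xs \<in> EG_simplices G (Suc m)
     \<and> (xs ! 0 = \<one>\<^bsub>G (Suc m + j)\<^esub> \<longrightarrow> (LF G d ^^ j) xs ! 0 = \<one>\<^bsub>G (Suc m)\<^esub>)"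
    using Suc.IH[of "Suc m"] Suc.prems by simp
  show ?case using IH LF_simp[OF sg, of "(LF G d ^^ j) xs" m] by simp
qed

lemma face0_S:
  assumes sg: "simplicial_group G d s" and ne: "xs \<noteq> []"
    and c: "xs ! 0 \<in> carrier (G (length xs - 1))"
  shows "EG_face G d 0 (S_simp G xs) = xs"
proof -
  obtain m where m: "length xs = Suc m" using ne by (cases xs) auto
  obtain x ys where xs: "xs = x # ys" using ne by (cases xs) auto
  have x: "x \<in> carrier (G m)" using c m xs by simp
  have "d (Suc m) 0 \<one>\<^bsub>G (Suc m)\<^esub> \<otimes>\<^bsub>G m\<^esub> x = x"
    using sg_d_one[OF sg, of 0 m] x sg_group[OF sg, of m] by (simp add: group.is_monoid monoid.l_one)
  then show ?thesis unfolding EG_face_def S_simp_def Let_def using m xs by simp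
qed

lemma S_simplices:
  assumes sg: "simplicial_group G d s" and y: "y \<in> EG_simplices G q"
  shows "S_simp G y \<in> EG_simplices G (Suc q)"
proof -
  have len: "length y = Suc q" using y by (simp add: EG_simplices_def)
  have "\<forall>i\<le>Suc q. S_simp G y ! i \<in> carrier (G (Suc q - i))"
  proof (intro allI impI)
    fix i assume i: "i \<le> Suc q"
    show "S_simp G y ! i \<in> carrier (G (Suc q - i))"
    proof (cases i)
      case 0 then show ?thesis using len sg_group[OF sg] by (simp add: S_simp_def group.is_monoid monoid.one_closed)
    next
      case (Suc i') then show ?thesis using y i by (simp add: S_simp_def EG_simplices_def)
    qed
  qed
  then show ?thesis using len by (simp add: EG_simplices_def S_simp_def)
qed

lemma degen_S:
  assumes sg: "simplicial_group G d s" and x: "EG_degenerate G s x"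
  shows "EG_degenerate G s (S_simp G x)"
proof -
  obtain q k y where y: "y \<in> EG_simplices G q" and k: "k \<le> q" and xe: "x = EG_degen G s k y"
    using x unfolding EG_degenerate_def by blast
  have len: "length y = Suc q" using y by (simp add: EG_simplices_def)
  have "S_simp G x = EG_degen G s (Suc k) (S_simp G y)"
    unfolding xe EG_degen_def S_simp_def Let_def using len k
    by (simp add: map_upt_Suc sg_s_one[OF sg] del: upt_Suc)
  then show ?thesis unfolding EG_degenerate_def using S_simplices[OF sg y] k by fastforce
qed

lemma degen_S1:
  assumes sg: "simplicial_group G d s" and x: "x \<in> EG_simplices G q" and x0: "x ! 0 = \<one>\<^bsub>G q\<^esub>"
  shows "EG_degenerate G s (S_simp G x)"
proof -
  have len: "length x = Suc q" using x by (simp add: EG_simplices_def)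
  then obtain w where xw: "x = \<one>\<^bsub>G q\<^esub> # w" using x0 by (cases x) auto
  have "S_simp G x = EG_degen G s 0 x"
    unfolding EG_degen_def S_simp_def Let_def using len xw
    by (simp add: sg_s_one[OF sg])
  then show ?thesis unfolding EG_degenerate_def using x by fastforce
qed

lemma degen_Cons:
  assumes "length y' = Suc q'" "k' \<le> q'"
  shows "tl (EG_degen G s (Suc k') (a # y')) = EG_degen G s k' y'"
  unfolding EG_degen_def Let_def using assms
  by (simp add: map_upt_Suc del: upt_Suc)

lemma degen_S_inv:
  assumes sg: "simplicial_group G d s" and sig: "\<sigma> \<in> EG_simplices G n"
    and dg: "EG_degenerate G s (S_simp G \<sigma>)"
  shows "\<sigma> ! 0 = \<one>\<^bsub>G n\<^esub> \<or> EG_degenerate G s \<sigma>"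
proof -
  obtain q k y where y: "y \<in> EG_simplices G q" and k: "k \<le> q" and xe: "S_simp G \<sigma> = EG_degen G s k y"
    using dg unfolding EG_degenerate_def by blast
  have lens: "length \<sigma> = Suc n" using sig by (simp add: EG_simplices_def)
  have leny: "length y = Suc q" using y by (simp add: EG_simplices_def)
  have "length (S_simp G \<sigma>) = Suc (Suc q)" unfolding xe EG_degen_def Let_def using leny k by simp
  then have qn: "q = n" using lens by (simp add: S_simp_def)
  show ?thesis
  proof (cases k)
    case 0
    have "S_simp G \<sigma> ! 1 = \<one>\<^bsub>G q\<^esub>" unfolding xe EG_degen_def Let_def 0 using leny by simp
    then show ?thesis using qn by (simp add: S_simp_def)
  next
    case (Suc k')
    have yall: "\<forall>i\<le>q. y ! i \<in> carrier (G (q - i))" using y by (simp add: EG_simplices_def)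
    have y0c: "y ! 0 \<in> carrier (G q)" using yall[rule_format, of 0] by simp
    have "S_simp G \<sigma> ! 0 = s q k (y ! 0)" unfolding xe EG_degen_def Let_def using leny
      by (simp add: nth_append del: upt_Suc)
    then have "s q k (y ! 0) = \<one>\<^bsub>G (Suc q)\<^esub>" using lens qn by (simp add: S_simp_def)
    then have "d (Suc q) k (s q k (y ! 0)) = \<one>\<^bsub>G q\<^esub>" using sg_d_one[OF sg, of k q] k by simp
    then have y0: "y ! 0 = \<one>\<^bsub>G q\<^esub>" using sg_ds[OF sg k y0c] by simp
    obtain q' where q': "q = Suc q'" using k Suc by (cases q) auto
    obtain y' where yy: "y = \<one>\<^bsub>G q\<^esub> # y'" using leny y0 by (cases y) auto
    have y': "y' \<in> EG_simplices G q'"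
    proof -
      have "\<forall>i\<le>q'. y' ! i \<in> carrier (G (q' - i))"
      proof (intro allI impI)
        fix i assume "i \<le> q'"
        then have "y ! Suc i \<in> carrier (G (q - Suc i))" using yall[rule_format, of "Suc i"] q' by simp
        then show "y' ! i \<in> carrier (G (q' - i))" using yy q' by simp
      qed
      then show ?thesis using leny yy q' by (simp add: EG_simplices_def)
    qed
    have "\<sigma> = tl (S_simp G \<sigma>)" by (simp add: S_simp_def)
    also have "\<dots> = EG_degen G s k' y'"
      unfolding xe yy Suc using degen_Cons leny yy q' k Suc by simp
    moreover have "EG_degenerate G s (EG_degen G s k' y')" unfolding EG_degenerate_def
      using y' k Suc q' by (intro exI[of _ q'] exI[of _ k'] exI[of _ y']) simp
    ultimately show ?thesis by simp
  qed
qed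

lemma S_simp_inj: "inj_on (S_simp G) A"
  by (rule inj_onI) (simp add: S_simp_def)

lemma S_chain_at:
  assumes fin: "finite {\<sigma>. c \<sigma> \<noteq> 0}" and x: "c x \<noteq> 0"
  shows "S_chain G s c (S_simp G x) = (if EG_degenerate G s (S_simp G x) then 0 else c x)"
proof -
  have "S_chain G s c (S_simp G x) = (\<Sum>\<sigma>\<in>{\<sigma>. c \<sigma> \<noteq> 0}.
     (if \<sigma> = x then (if EG_degenerate G s (S_simp G x) then 0 else c x) else 0))"
    unfolding S_chain_def
    by (rule sum.cong) (auto simp: gen_def S_simp_def)
  also have "\<dots> = (if EG_degenerate G s (S_simp G x) then 0 else c x)"
    using fin x by (simp add: sum.delta')
  finally show ?thesis .
qed

lemma S_chain_sum:
  assumes fin: "finite {\<sigma>. c \<sigma> \<noteq> 0}"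
  shows "(\<Sum>\<tau>\<in>{\<tau>. S_chain G s c \<tau> \<noteq> 0}. S_chain G s c \<tau> * f \<tau>)
     = (\<Sum>\<sigma>\<in>{\<sigma>. c \<sigma> \<noteq> 0}. c \<sigma> * (if EG_degenerate G s (S_simp G \<sigma>) then 0 else f (S_simp G \<sigma>)))"
proof -
  let ?C = "{\<sigma>. c \<sigma> \<noteq> 0}"
  have sub: "{\<tau>. S_chain G s c \<tau> \<noteq> 0} \<subseteq> S_simp G ` ?C"
  proof
    fix \<tau> assume "\<tau> \<in> {\<tau>. S_chain G s c \<tau> \<noteq> 0}"
    then have "(\<Sum>\<sigma>\<in>?C. c \<sigma> * gen G s (S_simp G \<sigma>) \<tau>) \<noteq> 0" by (simp add: S_chain_def)
    then obtain \<sigma> where "\<sigma> \<in> ?C" "c \<sigma> * gen G s (S_simp G \<sigma>) \<tau> \<noteq> 0"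
      by (rule sum.not_neutral_contains_not_neutral)
    then have "\<sigma> \<in> ?C" "gen G s (S_simp G \<sigma>) \<tau> \<noteq> 0" by auto
    then show "\<tau> \<in> S_simp G ` ?C" by (auto simp: gen_def split: if_splits)
  qed
  have "(\<Sum>\<tau>\<in>{\<tau>. S_chain G s c \<tau> \<noteq> 0}. S_chain G s c \<tau> * f \<tau>)
      = (\<Sum>\<tau>\<in>S_simp G ` ?C. S_chain G s c \<tau> * f \<tau>)"
    by (rule sum.mono_neutral_left) (use fin sub in auto)
  also have "\<dots> = (\<Sum>\<sigma>\<in>?C. S_chain G s c (S_simp G \<sigma>) * f (S_simp G \<sigma>))"
    by (simp add: sum.reindex[OF S_simp_inj])
  also have "\<dots> = (\<Sum>\<sigma>\<in>?C. c \<sigma> * (if EG_degenerate G s (S_simp G \<sigma>) then 0 else f (S_simp G \<sigma>)))"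
    by (rule sum.cong) (auto simp: S_chain_at[OF fin])
  finally show ?thesis .
qed

lemma gen_degen: "EG_degenerate G s x \<Longrightarrow> gen G s x = (\<lambda>_. 0)"
  by (auto simp: gen_def)

lemma STI:
  assumes sg: "simplicial_group G d s" and fin: "finite I"
  shows "S_tensor_id G s (\<lambda>\<rho>. \<Sum>i\<in>I. w i * tensor (gen G s (f i)) (gen G s (g i)) \<rho>) \<rho>0
       = (\<Sum>i\<in>I. w i * tensor (gen G s (S_simp G (f i))) (gen G s (g i)) \<rho>0)"
proof -
  define X where "X = (\<lambda>\<rho>. \<Sum>i\<in>I. w i * tensor (gen G s (f i)) (gen G s (g i)) \<rho>)"
  define A where "A = (\<lambda>i. (f i, g i)) ` I"
  define H where "H = (\<lambda>\<pi>. tensor (gen G s (S_simp G (fst \<pi>))) (gen G s (snd \<pi>)) \<rho>0)"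
  have finA: "finite A" using fin by (simp add: A_def)
  have T: "\<And>i \<pi>. tensor (gen G s (f i)) (gen G s (g i)) \<pi> =
      (if \<pi> = (f i, g i) \<and> \<not> EG_degenerate G s (f i) \<and> \<not> EG_degenerate G s (g i) then 1 else 0)"
    by (auto simp: tensor_def gen_def split: prod.splits)
  have sub: "{\<pi>. X \<pi> \<noteq> 0} \<subseteq> A"
  proof
    fix \<pi> assume "\<pi> \<in> {\<pi>. X \<pi> \<noteq> 0}"
    then have "(\<Sum>i\<in>I. w i * tensor (gen G s (f i)) (gen G s (g i)) \<pi>) \<noteq> 0" unfolding X_def by simp
    then obtain i where "i \<in> I" "w i * tensor (gen G s (f i)) (gen G s (g i)) \<pi> \<noteq> 0"
      by (rule sum.not_neutral_contains_not_neutral)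
    then have "i \<in> I" "tensor (gen G s (f i)) (gen G s (g i)) \<pi> \<noteq> 0" by auto
    then show "\<pi> \<in> A" unfolding A_def using T[of i \<pi>] by (auto split: if_splits)
  qed
  have "S_tensor_id G s X \<rho>0 = (\<Sum>\<pi>\<in>{\<pi>. X \<pi> \<noteq> 0}. X \<pi> * H \<pi>)"
    unfolding S_tensor_id_def H_def by (simp add: split_def)
  also have "\<dots> = (\<Sum>\<pi>\<in>A. X \<pi> * H \<pi>)"
    by (rule sum.mono_neutral_left) (use finA sub in auto)
  also have "\<dots> = (\<Sum>\<pi>\<in>A. \<Sum>i\<in>I. w i * tensor (gen G s (f i)) (gen G s (g i)) \<pi> * H \<pi>)"
    unfolding X_def by (simp add: sum_distrib_right)
  also have "\<dots> = (\<Sum>i\<in>I. \<Sum>\<pi>\<in>A. w i * tensor (gen G s (f i)) (gen G s (g i)) \<pi> * H \<pi>)"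
    by (rule sum.swap)
  also have "\<dots> = (\<Sum>i\<in>I. w i * tensor (gen G s (S_simp G (f i))) (gen G s (g i)) \<rho>0)"
  proof (rule sum.cong[OF refl])
    fix i assume i: "i \<in> I"
    have mem: "(f i, g i) \<in> A" using i by (simp add: A_def)
    have "(\<Sum>\<pi>\<in>A. w i * tensor (gen G s (f i)) (gen G s (g i)) \<pi> * H \<pi>)
       = (\<Sum>\<pi>\<in>A. if \<pi> = (f i, g i) then
            (if \<not> EG_degenerate G s (f i) \<and> \<not> EG_degenerate G s (g i) then w i * H (f i, g i) else 0) else 0)"
      by (rule sum.cong[OF refl]) (simp add: T)
    also have "\<dots> = (if \<not> EG_degenerate G s (f i) \<and> \<not> EG_degenerate G s (g i) then w i * H (f i, g i) else 0)"
      using finA mem by (simp add: sum.delta')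
    also have "\<dots> = w i * tensor (gen G s (S_simp G (f i))) (gen G s (g i)) \<rho>0"
    proof (cases "EG_degenerate G s (f i)")
      case True
      then have "EG_degenerate G s (S_simp G (f i))" by (rule degen_S[OF sg])
      then show ?thesis using True by (simp add: gen_degen tensor_def split_def)
    next
      case False
      then show ?thesis by (cases "EG_degenerate G s (g i)") (auto simp: H_def gen_degen tensor_def split_def)
    qed
    finally show "(\<Sum>\<pi>\<in>A. w i * tensor (gen G s (f i)) (gen G s (g i)) \<pi> * H \<pi>)
       = w i * tensor (gen G s (S_simp G (f i))) (gen G s (g i)) \<rho>0" .
  qed
  finally show ?thesis unfolding X_def .
qed


lemma front_S0:
  assumes sg: "simplicial_group G d s" and sig: "\<sigma> \<in> EG_simplices G n"
  shows "front_face G d (Suc n) 0 (S_simp G \<sigma>) = e0 G"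
proof -
  have len: "length \<sigma> = Suc n" using sig by (simp add: EG_simplices_def)
  have "(LF G d ^^ n) \<sigma> \<in> EG_simplices G 0" using LF_iter_simp[OF sg, of \<sigma> 0 n] sig by simp
  then have l1: "length ((LF G d ^^ n) \<sigma>) = 1" unfolding EG_simplices_def by simp
  obtain x where x: "(LF G d ^^ n) \<sigma> = [x]"
  proof (cases "(LF G d ^^ n) \<sigma>")
    case Nil then show ?thesis using l1 by simp
  next
    case (Cons a w) then show ?thesis using l1 that by simp
  qed
  have "front_face G d (Suc n) 0 (S_simp G \<sigma>) = LF G d ((LF G d ^^ n) (S_simp G \<sigma>))"
    by (simp add: front_face_LF)
  also have "\<dots> = LF G d (S_simp G [x])" using LF_iter_S[OF sg, of n \<sigma>] len x by simp
  also have "\<dots> = [d 1 1 \<one>\<^bsub>G 1\<^esub>]" by (simp add: LF_eq S_simp_def)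
  also have "\<dots> = e0 G" using sg_d_one[OF sg, of 1 0] by (simp add: e0_def)
  finally show ?thesis .
qed

lemma front_S:
  assumes sg: "simplicial_group G d s" and len: "length \<sigma> = Suc n" and j: "j \<le> n"
  shows "front_face G d (Suc n) (Suc j) (S_simp G \<sigma>) = S_simp G (front_face G d n j \<sigma>)"
  unfolding front_face_LF using LF_iter_S[OF sg, of "n - j" \<sigma>] len j by simp

lemma back_S:
  assumes sg: "simplicial_group G d s" and sig: "\<sigma> \<in> EG_simplices G n"
  shows "back_face G d (Suc j) (S_simp G \<sigma>) = back_face G d j \<sigma>"
proof -
  have len: "length \<sigma> = Suc n" using sig by (simp add: EG_simplices_def)
  have sall: "\<forall>i\<le>n. \<sigma> ! i \<in> carrier (G (n - i))" using sig by (simp add: EG_simplices_def)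
  have c: "\<sigma> ! 0 \<in> carrier (G (length \<sigma> - 1))" using sall[rule_format, of 0] len by simp
  have "EG_face G d 0 (S_simp G \<sigma>) = \<sigma>" using face0_S[OF sg _ c] len by (metis list.size(3) nat.distinct(1))
  then show ?thesis unfolding back_face_def by (simp add: funpow_Suc_right del: funpow.simps)
qed

lemma front_deg:
  assumes sg: "simplicial_group G d s" and sig: "\<sigma> \<in> EG_simplices G n"
    and s0: "\<sigma> ! 0 = \<one>\<^bsub>G n\<^esub>" and j: "j \<le> n"
  shows "EG_degenerate G s (S_simp G (front_face G d n j \<sigma>))"
proof -
  have "\<sigma> \<in> EG_simplices G (j + (n - j))" using sig j by simp
  then have "(LF G d ^^ (n - j)) \<sigma> \<in> EG_simplices G j \<and> (LF G d ^^ (n - j)) \<sigma> ! 0 = \<one>\<^bsub>G j\<^esub>"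
    using LF_iter_simp[OF sg, of \<sigma> j "n - j"] s0 j by simp
  then show ?thesis unfolding front_face_LF using degen_S1[OF sg] by blast
qed

theorem lemma8p2:
  assumes "simplicial_group G d s"
    and "c \<in> EG_chains G s n"
  shows "(\<forall>k \<le> Suc n. P G d s (Suc n) k (S_chain G s c) =
           (if k = 0 then tensor (gen G s (e0 G)) (S_chain G s c)
            else S_tensor_id G s (P G d s n (k - 1) c))) \<and>
         AW G d s (Suc n) (S_chain G s c) =
           (\<lambda>\<rho>. S_tensor_id G s (AW G d s n c) \<rho> + tensor (gen G s (e0 G)) (S_chain G s c) \<rho>)"
proof -
  note sg = assms(1)
  let ?C = "{\<sigma>. c \<sigma> \<noteq> 0}"
  have fin: "finite ?C" using assms(2) by (simp add: EG_chains_def)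
  have Cprop: "\<And>\<sigma>. \<sigma> \<in> ?C \<Longrightarrow> \<sigma> \<in> EG_simplices G n \<and> \<not> EG_degenerate G s \<sigma>"
    using assms(2) by (simp add: EG_chains_def)
  have P0: "P G d s (Suc n) 0 (S_chain G s c) = tensor (gen G s (e0 G)) (S_chain G s c)"
  proof (rule ext)
    fix \<rho> :: "'a list \<times> 'a list"
    obtain a b where \<rho>: "\<rho> = (a, b)" by (cases \<rho>)
    have "P G d s (Suc n) 0 (S_chain G s c) \<rho> = (\<Sum>\<sigma>\<in>?C. c \<sigma> * (if EG_degenerate G s (S_simp G \<sigma>) then 0 else
        tensor (gen G s (front_face G d (Suc n) 0 (S_simp G \<sigma>))) (gen G s (back_face G d 0 (S_simp G \<sigma>))) \<rho>))"
      unfolding P_def by (rule S_chain_sum[OF fin])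
    also have "\<dots> = (\<Sum>\<sigma>\<in>?C. c \<sigma> * (gen G s (e0 G) a * gen G s (S_simp G \<sigma>) b))"
    proof (rule sum.cong[OF refl])
      fix \<sigma> assume "\<sigma> \<in> ?C"
      then have sig: "\<sigma> \<in> EG_simplices G n" using Cprop by blast
      show "c \<sigma> * (if EG_degenerate G s (S_simp G \<sigma>) then 0 else
        tensor (gen G s (front_face G d (Suc n) 0 (S_simp G \<sigma>))) (gen G s (back_face G d 0 (S_simp G \<sigma>))) \<rho>)
        = c \<sigma> * (gen G s (e0 G) a * gen G s (S_simp G \<sigma>) b)"
        using front_S0[OF sg sig] by (simp add: back_face_def tensor_def \<rho> gen_degen)
    qed
    also have "\<dots> = tensor (gen G s (e0 G)) (S_chain G s c) \<rho>"
      by (simp add: tensor_def \<rho> S_chain_def sum_distrib_left mult.left_commute)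
    finally show "P G d s (Suc n) 0 (S_chain G s c) \<rho> = tensor (gen G s (e0 G)) (S_chain G s c) \<rho>" .
  qed
  have PS: "P G d s (Suc n) (Suc j) (S_chain G s c) = S_tensor_id G s (P G d s n j c)" if j: "j \<le> n" for j
  proof (rule ext)
    fix \<rho> :: "'a list \<times> 'a list"
    have "P G d s (Suc n) (Suc j) (S_chain G s c) \<rho> = (\<Sum>\<sigma>\<in>?C. c \<sigma> * (if EG_degenerate G s (S_simp G \<sigma>) then 0 else
        tensor (gen G s (front_face G d (Suc n) (Suc j) (S_simp G \<sigma>))) (gen G s (back_face G d (Suc j) (S_simp G \<sigma>))) \<rho>))"
      unfolding P_def by (rule S_chain_sum[OF fin])
    also have "\<dots> = (\<Sum>\<sigma>\<in>?C. c \<sigma> * tensor (gen G s (S_simp G (front_face G d n j \<sigma>))) (gen G s (back_face G d j \<sigma>)) \<rho>)"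
    proof (rule sum.cong[OF refl])
      fix \<sigma> assume "\<sigma> \<in> ?C"
      then have sig: "\<sigma> \<in> EG_simplices G n" and nd: "\<not> EG_degenerate G s \<sigma>" using Cprop by blast+
      have len: "length \<sigma> = Suc n" using sig by (simp add: EG_simplices_def)
      show "c \<sigma> * (if EG_degenerate G s (S_simp G \<sigma>) then 0 else
        tensor (gen G s (front_face G d (Suc n) (Suc j) (S_simp G \<sigma>))) (gen G s (back_face G d (Suc j) (S_simp G \<sigma>))) \<rho>)
        = c \<sigma> * tensor (gen G s (S_simp G (front_face G d n j \<sigma>))) (gen G s (back_face G d j \<sigma>)) \<rho>"
      proof (cases "EG_degenerate G s (S_simp G \<sigma>)")
        case True
        then have "\<sigma> ! 0 = \<one>\<^bsub>G n\<^esub>" using degen_S_inv[OF sg sig] nd by blast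
        then have "EG_degenerate G s (S_simp G (front_face G d n j \<sigma>))" by (rule front_deg[OF sg sig _ j])
        then show ?thesis using True by (simp add: gen_degen tensor_def split_def)
      next
        case False
        then show ?thesis by (simp add: front_S[OF sg len j] back_S[OF sg sig])
      qed
    qed
    also have "\<dots> = S_tensor_id G s (P G d s n j c) \<rho>"
      unfolding P_def by (rule STI[OF sg fin, symmetric])
    finally show "P G d s (Suc n) (Suc j) (S_chain G s c) \<rho> = S_tensor_id G s (P G d s n j c) \<rho>" .
  qed
  have part1: "\<forall>k \<le> Suc n. P G d s (Suc n) k (S_chain G s c) =
           (if k = 0 then tensor (gen G s (e0 G)) (S_chain G s c)
            else S_tensor_id G s (P G d s n (k - 1) c))"
  proof (intro allI impI)
    fix k assume k: "k \<le> Suc n"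
    show "P G d s (Suc n) k (S_chain G s c) =
           (if k = 0 then tensor (gen G s (e0 G)) (S_chain G s c)
            else S_tensor_id G s (P G d s n (k - 1) c))"
    proof (cases k)
      case 0 then show ?thesis using P0 by simp
    next
      case (Suc j) then show ?thesis using PS[of j] k by simp
    qed
  qed
  let ?I = "{..n} \<times> ?C"
  have finI: "finite ?I" using fin by simp
  have AWeq: "AW G d s n c = (\<lambda>\<rho>. \<Sum>i\<in>?I. c (snd i) *
      tensor (gen G s (front_face G d n (fst i) (snd i))) (gen G s (back_face G d (fst i) (snd i))) \<rho>)"
    by (rule ext) (simp add: AW_def P_def sum.cartesian_product split_def)
  have sumS: "(\<Sum>j\<le>n. S_tensor_id G s (P G d s n j c) \<rho>) = S_tensor_id G s (AW G d s n c) \<rho>" for \<rho>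
  proof -
    have "(\<Sum>j\<le>n. S_tensor_id G s (P G d s n j c) \<rho>) = (\<Sum>j\<le>n. \<Sum>\<sigma>\<in>?C. c \<sigma> *
        tensor (gen G s (S_simp G (front_face G d n j \<sigma>))) (gen G s (back_face G d j \<sigma>)) \<rho>)"
      unfolding P_def by (rule sum.cong[OF refl], rule STI[OF sg fin])
    also have "\<dots> = (\<Sum>i\<in>?I. c (snd i) *
      tensor (gen G s (S_simp G (front_face G d n (fst i) (snd i)))) (gen G s (back_face G d (fst i) (snd i))) \<rho>)"
      by (simp add: sum.cartesian_product split_def)
    also have "\<dots> = S_tensor_id G s (AW G d s n c) \<rho>"
      unfolding AWeq by (rule STI[OF sg finI, symmetric])
    finally show ?thesis .
  qed
  have part2: "AW G d s (Suc n) (S_chain G s c) =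
           (\<lambda>\<rho>. S_tensor_id G s (AW G d s n c) \<rho> + tensor (gen G s (e0 G)) (S_chain G s c) \<rho>)"
  proof (rule ext)
    fix \<rho> :: "'a list \<times> 'a list"
    have "AW G d s (Suc n) (S_chain G s c) \<rho> = P G d s (Suc n) 0 (S_chain G s c) \<rho>
        + (\<Sum>j\<le>n. P G d s (Suc n) (Suc j) (S_chain G s c) \<rho>)"
      unfolding AW_def by (simp add: sum.atMost_Suc_shift del: sum.atMost_Suc)
    also have "\<dots> = tensor (gen G s (e0 G)) (S_chain G s c) \<rho> + (\<Sum>j\<le>n. S_tensor_id G s (P G d s n j c) \<rho>)"
      using P0 PS by simp
    also have "\<dots> = S_tensor_id G s (AW G d s n c) \<rho> + tensor (gen G s (e0 G)) (S_chain G s c) \<rho>"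
      using sumS by simp
    finally show "AW G d s (Suc n) (S_chain G s c) \<rho> = S_tensor_id G s (AW G d s n c) \<rho> + tensor (gen G s (e0 G)) (S_chain G s c) \<rho>" .
  qed
  show ?thesis using part1 part2 by blast
qed

end
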